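(* Let $G$ and $G'$ be connected graphs of bounded degree which are quasi-isometric. If $G$ is extraterrestrial, then $G'$ is extraterrestrial.
   Context: A graph $G=(V,E)$ has undirected edges; $d_G$ is the shortest-path metric on $V$. A path of length $n$ is a sequence $w_0,\dots,w_n$ of distinct vertices with consecutive ones adjacent. For finite $A,B\subseteq V$, a matching is a relation $M\subseteq A\times B$ whose two coordinate projections are injective; it is complete if it induces a bijection $A\to B$; it is by paths of length at most $k$ if $d_G(u,v)\le k$ for every $(u,v)\in M$. For integers $m,k,r\ge 0$, an $(m,k,r)$-UFO in $G$ is a triple $(U,F,O)$ of pairwise disjoint finite subsets of $V$, with $U$ nonempty, such that: (1) $|U|\ge m|F|$; (2) there is a complete matching between $U$ and $O$ by paths of length at most $k$; (3) every path in $G$ from a vertex of $U$ to a vertex of $O$ either contains a vertex of $F$ or has length at least $r$. A graph $G$ is extraterrestrial if for every $m\in\mathbb N$ there exists $k\in\mathbb N$ such that for every $r\in\mathbb N$ there exists an $(m,k,r)$-UFO in $G$. Graphs $G=(V,E)$, $G'=(V',E')$ are quasi-isometric if there are $f:V\to V'$ and constants $A,B,C>0$ with $\frac1A d_G(v_1,v_2)-B\le d_{G'}(f(v_1),f(v_2))\le A d_G(v_1,v_2)+B$ for all $v_1,v_2\in V$, and every $v'\in V'$ is at $d_{G'}$-distance at most $C$ from $f(V)$. *)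

theory Defs
  imports Complex_Main
begin

text \<open>A graph is given by its vertex type (all elements of the type are vertices)
  and a symmetric, irreflexive adjacency relation.\<close>

definition graph :: "('a \<Rightarrow> 'a \<Rightarrow> bool) \<Rightarrow> bool" where
  "graph E \<longleftrightarrow> (\<forall>u v. E u v \<longrightarrow> E v u) \<and> (\<forall>v. \<not> E v v)"

definition bounded_degree :: "('a \<Rightarrow> 'a \<Rightarrow> bool) \<Rightarrow> bool" where
  "bounded_degree E \<longleftrightarrow> (\<exists>D::nat. \<forall>v. finite {w. E v w} \<and> card {w. E v w} \<le> D)"

definition is_path :: "('a \<Rightarrow> 'a \<Rightarrow> bool) \<Rightarrow> 'a list \<Rightarrow> bool" where
  "is_path E ws \<longleftrightarrow> ws \<noteq> [] \<and> distinct ws \<and> (\<forall>i. Suc i < length ws \<longrightarrow> E (ws ! i) (ws ! Suc i))"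

definition path_len :: "'a list \<Rightarrow> nat" where
  "path_len ws = length ws - 1"

definition connected_graph :: "('a \<Rightarrow> 'a \<Rightarrow> bool) \<Rightarrow> bool" where
  "connected_graph E \<longleftrightarrow> (\<forall>u v. \<exists>ws. is_path E ws \<and> hd ws = u \<and> last ws = v)"

text \<open>Shortest-path distance (meaningful for connected graphs).\<close>

definition gdist :: "('a \<Rightarrow> 'a \<Rightarrow> bool) \<Rightarrow> 'a \<Rightarrow> 'a \<Rightarrow> nat" where
  "gdist E u v = (LEAST n. \<exists>ws. is_path E ws \<and> hd ws = u \<and> last ws = v \<and> path_len ws = n)"

definition complete_matching_k :: "('a \<Rightarrow> 'a \<Rightarrow> bool) \<Rightarrow> nat \<Rightarrow> 'a set \<Rightarrow> 'a set \<Rightarrow> bool" where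
  "complete_matching_k E k A B \<longleftrightarrow>
     (\<exists>M. M \<subseteq> A \<times> B \<and> inj_on fst M \<and> inj_on snd M \<and> fst ` M = A \<and> snd ` M = B
        \<and> (\<forall>(u,v)\<in>M. gdist E u v \<le> k))"

definition UFO :: "('a \<Rightarrow> 'a \<Rightarrow> bool) \<Rightarrow> nat \<Rightarrow> nat \<Rightarrow> nat \<Rightarrow> 'a set \<Rightarrow> 'a set \<Rightarrow> 'a set \<Rightarrow> bool" where
  "UFO E m k r U F Ob \<longleftrightarrow>
     finite U \<and> finite F \<and> finite Ob \<and> U \<inter> F = {} \<and> U \<inter> Ob = {} \<and> F \<inter> Ob = {} \<and> U \<noteq> {}
     \<and> card U \<ge> m * card F
     \<and> complete_matching_k E k U Ob
     \<and> (\<forall>ws. is_path E ws \<and> hd ws \<in> U \<and> last ws \<in> Ob \<longrightarrow> set ws \<inter> F \<noteq> {} \<or> path_len ws \<ge> r)"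

definition extraterrestrial :: "('a \<Rightarrow> 'a \<Rightarrow> bool) \<Rightarrow> bool" where
  "extraterrestrial E \<longleftrightarrow> (\<forall>m. \<exists>k. \<forall>r. \<exists>U F Ob. UFO E m k r U F Ob)"

definition quasi_isometric :: "('a \<Rightarrow> 'a \<Rightarrow> bool) \<Rightarrow> ('b \<Rightarrow> 'b \<Rightarrow> bool) \<Rightarrow> bool" where
  "quasi_isometric E E' \<longleftrightarrow>
     (\<exists>(f::'a \<Rightarrow> 'b) (A::real) (B::real) (C::real). A > 0 \<and> B > 0 \<and> C > 0
        \<and> (\<forall>v1 v2. real (gdist E v1 v2) / A - B \<le> real (gdist E' (f v1) (f v2))
                 \<and> real (gdist E' (f v1) (f v2)) \<le> A * real (gdist E v1 v2) + B)
        \<and> (\<forall>v'. \<exists>v. real (gdist E' v' (f v)) \<le> C))"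

end

theory Submission
  imports Defs
begin


lemma is_path_succ: "is_path E ws \<longleftrightarrow> ws \<noteq> [] \<and> distinct ws \<and> successively E ws"
  unfolding is_path_def successively_conv_nth by blast

lemma walk_to_path:
  assumes "ws \<noteq> []" "successively E ws"
  shows "\<exists>ps. is_path E ps \<and> hd ps = hd ws \<and> last ps = last ws \<and> set ps \<subseteq> set ws \<and> length ps \<le> length ws"
  using assms
proof (induction "length ws" arbitrary: ws rule: less_induct)
  case less
  show ?case
  proof (cases "distinct ws")
    case True then show ?thesis using less.prems by (auto simp: is_path_succ)
  next
    case False
    then obtain xs ys zs y where ws: "ws = xs@[y]@ys@[y]@zs" using not_distinct_decomp by blast
    let ?w = "xs@[y]@zs"
    have s: "successively E ?w" using less.prems(2) unfolding ws
      by (auto simp: successively_append_iff successively_Cons split: if_splits)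
    have "length ?w < length ws" using ws by simp
    then obtain ps where ps: "is_path E ps \<and> hd ps = hd ?w \<and> last ps = last ?w \<and> set ps \<subseteq> set ?w \<and> length ps \<le> length ?w"
      using less.hyps[of ?w] s by auto
    have "hd ?w = hd ws" "last ?w = last ws" "set ?w \<subseteq> set ws" using ws by (auto simp: hd_append)
    then have "set ps \<subseteq> set ws" "length ps \<le> length ws" "hd ps = hd ws" "last ps = last ws" "is_path E ps"
      using ps \<open>length ?w < length ws\<close> by auto
    then show ?thesis by blast
  qed
qed

lemma gdist_le:
  assumes "is_path E ws" shows "gdist E (hd ws) (last ws) \<le> path_len ws"
  unfolding gdist_def by (rule Least_le) (use assms in blast)

lemma gdist_path:
  assumes "connected_graph E"
  shows "\<exists>ws. is_path E ws \<and> hd ws = u \<and> last ws = v \<and> path_len ws = gdist E u v"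
proof -
  obtain ws where "is_path E ws \<and> hd ws = u \<and> last ws = v" using assms unfolding connected_graph_def by blast
  then have "\<exists>n ws. is_path E ws \<and> hd ws = u \<and> last ws = v \<and> path_len ws = n" by blast
  from LeastI_ex[OF this] show ?thesis unfolding gdist_def by blast
qed

lemma walk_gdist:
  assumes "ws \<noteq> []" "successively E ws"
  shows "gdist E (hd ws) (last ws) \<le> length ws - 1"
proof -
  obtain ps where "is_path E ps \<and> hd ps = hd ws \<and> last ps = last ws \<and> set ps \<subseteq> set ws \<and> length ps \<le> length ws"
    using walk_to_path[OF assms] by blast
  then show ?thesis using gdist_le[of E ps] unfolding path_len_def by auto
qed

lemma gdist_sym:
  assumes "graph E" "connected_graph E"
  shows "gdist E u v = gdist E v u"
proof -
  have *: "gdist E v u \<le> gdist E u v" for u v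
  proof -
    obtain ws where ws: "is_path E ws \<and> hd ws = u \<and> last ws = v \<and> path_len ws = gdist E u v"
      using gdist_path[OF assms(2)] by blast
    have "successively E (rev ws)" using ws assms(1) unfolding is_path_succ graph_def
      by (auto intro: successively_mono)
    then have "gdist E (hd (rev ws)) (last (rev ws)) \<le> length (rev ws) - 1"
      using walk_gdist[of "rev ws" E] ws by (auto simp: is_path_def)
    then show ?thesis using ws by (auto simp: hd_rev last_rev path_len_def)
  qed
  show ?thesis using *[of u v] *[of v u] by simp
qed

lemma gdist_triangle:
  assumes "connected_graph E"
  shows "gdist E u w \<le> gdist E u v + gdist E v w"
proof -
  obtain p1 where p1: "is_path E p1 \<and> hd p1 = u \<and> last p1 = v \<and> path_len p1 = gdist E u v"
    using gdist_path[OF assms] by blast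
  obtain p2 where p2: "is_path E p2 \<and> hd p2 = v \<and> last p2 = w \<and> path_len p2 = gdist E v w"
    using gdist_path[OF assms] by blast
  let ?w = "p1 @ tl p2"
  have ne: "p1 \<noteq> []" "p2 \<noteq> []" using p1 p2 by (auto simp: is_path_def)
  have s: "successively E ?w" using p1 p2 ne unfolding is_path_succ
    by (cases p2) (auto simp: successively_append_iff successively_Cons)
  have "hd ?w = u" using p1 ne by simp
  have "last ?w = w" using p1 p2 ne by (cases p2) (auto simp: last_append)
  then show ?thesis using walk_gdist[of ?w E] s ne p1 p2 \<open>hd ?w = u\<close> by (auto simp: path_len_def)
qed

lemma gdist_self: "gdist E u u = 0"
  using gdist_le[of E "[u]"] by (simp add: is_path_def path_len_def)

lemma gdist_edge: "E u v \<Longrightarrow> gdist E u v \<le> 1"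
  using walk_gdist[of "[u,v]" E] by simp

lemma gdist_nth:
  assumes "is_path E ps" "i < length ps"
  shows "gdist E (hd ps) (ps ! i) \<le> i"
proof -
  have "successively E (take (Suc i) ps)" using assms unfolding is_path_succ successively_conv_nth by auto
  then have "gdist E (hd (take (Suc i) ps)) (last (take (Suc i) ps)) \<le> length (take (Suc i) ps) - 1"
    using walk_gdist[of "take (Suc i) ps" E] assms by (auto simp: is_path_def)
  moreover have "hd (take (Suc i) ps) = hd ps" using assms by (cases ps) (auto simp: is_path_def)
  moreover have "last (take (Suc i) ps) = ps ! i" using assms by (subst last_conv_nth) (auto simp: is_path_def min_def intro: arg_cong[where f="(!) ps"])
  ultimately show ?thesis using assms by simp
qed

lemma gdist_mem:
  assumes "is_path E ps" "y \<in> set ps"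
  shows "gdist E (hd ps) y \<le> path_len ps"
proof -
  obtain i where "i < length ps" "y = ps ! i" using assms(2) by (auto simp: in_set_conv_nth)
  then show ?thesis using gdist_nth[OF assms(1), of i] by (auto simp: path_len_def)
qed




lemma ball_card:
  assumes conn: "connected_graph E" and deg: "\<forall>v. finite {w. E v w} \<and> card {w. E v w} \<le> D"
  shows "finite {y. gdist E x y \<le> t} \<and> card {y. gdist E x y \<le> t} \<le> (D+1)^t"
proof (induction t)
  case 0
  have "{y. gdist E x y \<le> 0} \<subseteq> {x}"
  proof
    fix y assume "y \<in> {y. gdist E x y \<le> 0}"
    then have "gdist E x y = 0" by simp
    moreover obtain ws where "is_path E ws \<and> hd ws = x \<and> last ws = y \<and> path_len ws = gdist E x y"
      using gdist_path[OF conn] by blast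
    ultimately show "y \<in> {x}" by (cases ws) (auto simp: path_len_def is_path_def)
  qed
  then show ?case using card_mono[of "{x}"] by (auto intro: finite_subset)
next
  case (Suc t)
  let ?B = "{y. gdist E x y \<le> t}"
  have sub: "{y. gdist E x y \<le> Suc t} \<subseteq> (\<Union>y\<in>?B. insert y {z. E y z})"
  proof
    fix z assume "z \<in> {y. gdist E x y \<le> Suc t}"
    then have z: "gdist E x z \<le> Suc t" by simp
    show "z \<in> (\<Union>y\<in>?B. insert y {z. E y z})"
    proof (cases "gdist E x z \<le> t")
      case True then show ?thesis by blast
    next
      case False
      then have eq: "gdist E x z = Suc t" using z by simp
      obtain ps where ps: "is_path E ps \<and> hd ps = x \<and> last ps = z \<and> path_len ps = gdist E x z"
        using gdist_path[OF conn] by blast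
      then have len: "length ps = Suc (Suc t)" using eq by (auto simp: path_len_def)
      have "E (ps ! t) (ps ! Suc t)" using ps len unfolding is_path_def by auto
      moreover have "ps ! Suc t = z" using ps len last_conv_nth[of ps] by (simp add: is_path_def)
      moreover have "gdist E x (ps ! t) \<le> t" using gdist_nth[of E ps t] ps len by auto
      ultimately show ?thesis by blast
    qed
  qed
  have fin: "finite (\<Union>y\<in>?B. insert y {z. E y z})" using Suc deg by auto
  have "card (\<Union>y\<in>?B. insert y {z. E y z}) \<le> (\<Sum>y\<in>?B. card (insert y {z. E y z}))"
    using card_UN_le Suc by blast
  also have "\<dots> \<le> (\<Sum>y\<in>?B. D + 1)"
    by (rule sum_mono) (use deg in \<open>auto intro: le_trans[OF card_insert_le_m1]\<close>)
  also have "\<dots> = card ?B * (D+1)" by simp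
  also have "\<dots> \<le> (D+1)^t * (D+1)" using Suc mult_le_mono1 by blast
  also have "\<dots> = (D+1)^Suc t" by simp
  finally show ?case using sub fin card_mono[OF fin sub] finite_subset[OF sub fin] by linarith
qed

lemma greedy:
  assumes "finite S"
    and "\<forall>s\<in>S. card {s'\<in>S. g1 s' = g1 s} \<le> c" and "\<forall>s\<in>S. card {s'\<in>S. g2 s' = g2 s} \<le> c"
  shows "\<exists>S0\<subseteq>S. inj_on g1 S0 \<and> inj_on g2 S0 \<and> card S \<le> 2 * c * card S0"
  using assms
proof (induction S rule: finite_psubset_induct)
  case (psubset S)
  show ?case
  proof (cases "S = {}")
    case True then show ?thesis by auto
  next
    case False
    then obtain s where s: "s \<in> S" by blast
    let ?T = "{s'\<in>S. g1 s' = g1 s \<or> g2 s' = g2 s}"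
    have T: "?T = {s'\<in>S. g1 s' = g1 s} \<union> {s'\<in>S. g2 s' = g2 s}" by blast
    have cT: "card ?T \<le> 2 * c"
      unfolding T using card_Un_le[of "{s'\<in>S. g1 s' = g1 s}" "{s'\<in>S. g2 s' = g2 s}"] psubset.prems s by force
    have ps: "S - ?T \<subset> S" using s by blast
    have "\<forall>s\<in>S - ?T. card {s'\<in>S - ?T. g1 s' = g1 s} \<le> c"
    proof
      fix x assume "x \<in> S - ?T"
      then have "card {s'\<in>S. g1 s' = g1 x} \<le> c" using psubset.prems by blast
      moreover have "card {s'\<in>S - ?T. g1 s' = g1 x} \<le> card {s'\<in>S. g1 s' = g1 x}"
        by (rule card_mono) (use psubset.hyps in auto)
      ultimately show "card {s'\<in>S - ?T. g1 s' = g1 x} \<le> c" by simp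
    qed
    moreover have "\<forall>s\<in>S - ?T. card {s'\<in>S - ?T. g2 s' = g2 s} \<le> c"
    proof
      fix x assume "x \<in> S - ?T"
      then have "card {s'\<in>S. g2 s' = g2 x} \<le> c" using psubset.prems by blast
      moreover have "card {s'\<in>S - ?T. g2 s' = g2 x} \<le> card {s'\<in>S. g2 s' = g2 x}"
        by (rule card_mono) (use psubset.hyps in auto)
      ultimately show "card {s'\<in>S - ?T. g2 s' = g2 x} \<le> c" by simp
    qed
    ultimately obtain S1 where S1: "S1 \<subseteq> S - ?T" "inj_on g1 S1" "inj_on g2 S1" "card (S - ?T) \<le> 2 * c * card S1"
      using psubset.IH[OF ps] by blast
    have fS1: "finite S1" using S1(1) psubset.hyps finite_subset by blast
    have sS1: "s \<notin> S1" using S1(1) by blast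
    have Seq: "S = ?T \<union> (S - ?T)" by blast
    have "card (?T \<union> (S - ?T)) = card ?T + card (S - ?T)"
      by (rule card_Un_disjoint) (use psubset.hyps in auto)
    then have "card S = card ?T + card (S - ?T)" using Seq by simp
    also have "\<dots> \<le> 2 * c + 2 * c * card S1" using cT S1(4) by simp
    also have "\<dots> = 2 * c * card (insert s S1)" using fS1 sS1 by simp
    finally have "card S \<le> 2 * c * card (insert s S1)" .
    moreover have "inj_on g1 (insert s S1)" "inj_on g2 (insert s S1)" using S1 by auto
    moreover have "insert s S1 \<subseteq> S" using S1(1) s by blast
    ultimately show ?thesis by blast
  qed
qed




locale qi_ctx =
  fixes E :: "'a \<Rightarrow> 'a \<Rightarrow> bool" and E' :: "'b \<Rightarrow> 'b \<Rightarrow> bool" and f :: "'a \<Rightarrow> 'b"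
    and A B C :: real
  assumes gE: "graph E" "connected_graph E" and gE': "graph E'" "connected_graph E'"
    and Apos: "A > 0" and Bpos: "B > 0" and Cpos: "C > 0"
    and qi1: "\<And>v1 v2. real (gdist E v1 v2) \<le> A * (real (gdist E' (f v1) (f v2)) + B)"
    and qi2: "\<And>v1 v2. real (gdist E' (f v1) (f v2)) \<le> A * real (gdist E v1 v2) + B"
    and cov: "\<And>v'. \<exists>v. real (gdist E' v' (f v)) \<le> C"
begin

lemma tri': "real (gdist E' u w) \<le> real (gdist E' u v) + real (gdist E' v w)"
  using gdist_triangle[OF gE'(2)] by (metis of_nat_add of_nat_le_iff)

lemma sym': "gdist E' u v = gdist E' v u" using gdist_sym[OF gE'] .

lemma segment:
  assumes K: "A * (2*C+1+B) \<le> real K" and R: "C + A * real K + B \<le> R"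
    and w: "\<forall>x\<in>F. \<not> real (gdist E' w (f x)) \<le> R"
    and h1: "real (gdist E' w (f v)) \<le> C" and h2: "real (gdist E' w (f v2)) \<le> C+1"
  shows "\<exists>ps. is_path E ps \<and> hd ps = v \<and> last ps = v2 \<and> path_len ps \<le> K \<and> set ps \<inter> F = {}"
proof -
  have "real (gdist E' (f v) (f v2)) \<le> real (gdist E' (f v) w) + real (gdist E' w (f v2))" using tri' by blast
  also have "\<dots> \<le> 2*C+1" using h1 h2 sym'[of "f v" w] by simp
  finally have d1: "real (gdist E' (f v) (f v2)) \<le> 2*C+1" .
  have "real (gdist E v v2) \<le> A * (real (gdist E' (f v) (f v2)) + B)" by (rule qi1)
  also have "\<dots> \<le> A * (2*C+1+B)" using d1 Apos by (intro mult_left_mono) auto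
  finally have dK: "real (gdist E v v2) \<le> real K" using K by linarith
  obtain ps where ps: "is_path E ps \<and> hd ps = v \<and> last ps = v2 \<and> path_len ps = gdist E v v2"
    using gdist_path[OF gE(2)] by blast
  have "set ps \<inter> F = {}"
  proof (rule ccontr)
    assume "set ps \<inter> F \<noteq> {}"
    then obtain y where y: "y \<in> set ps" "y \<in> F" by blast
    have "gdist E v y \<le> path_len ps" using gdist_mem[of E ps y] ps y by auto
    then have dy: "real (gdist E v y) \<le> real K" using ps dK by simp
    have "real (gdist E' (f v) (f y)) \<le> A * real (gdist E v y) + B" by (rule qi2)
    also have "\<dots> \<le> A * real K + B" using dy Apos by simp
    finally have "real (gdist E' (f v) (f y)) \<le> A * real K + B" .
    then have "real (gdist E' w (f y)) \<le> R" using tri'[of w "f y" "f v"] h1 R by linarith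
    then show False using w y by blast
  qed
  then show ?thesis using ps dK by auto
qed

lemma chain:
  assumes K: "A * (2*C+1+B) \<le> real K" and R: "C + A * real K + B \<le> R"
  shows "\<forall>w0 v. (\<forall>w\<in>set (w0#xs). \<forall>x\<in>F. \<not> real (gdist E' w (f x)) \<le> R) \<and> successively E' (w0#xs)
     \<and> real (gdist E' w0 (f v)) \<le> C \<and> real (gdist E' (last (w0#xs)) (f z)) \<le> C \<longrightarrow>
     (\<exists>wk. wk \<noteq> [] \<and> successively E wk \<and> hd wk = v \<and> last wk = z \<and> set wk \<inter> F = {}
        \<and> length wk \<le> Suc (K * Suc (length xs)))"
proof (induction xs)
  case Nil
  show ?case
  proof (intro allI impI)
    fix w0 v
    assume a: "(\<forall>w\<in>set [w0]. \<forall>x\<in>F. \<not> real (gdist E' w (f x)) \<le> R) \<and> successively E' [w0]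
     \<and> real (gdist E' w0 (f v)) \<le> C \<and> real (gdist E' (last [w0]) (f z)) \<le> C"
    then obtain ps where "is_path E ps \<and> hd ps = v \<and> last ps = z \<and> path_len ps \<le> K \<and> set ps \<inter> F = {}"
      using segment[OF K R, of F w0 v z] by auto
    then show "\<exists>wk. wk \<noteq> [] \<and> successively E wk \<and> hd wk = v \<and> last wk = z \<and> set wk \<inter> F = {}
        \<and> length wk \<le> Suc (K * Suc (length []))"
      by (intro exI[of _ ps]) (auto simp: is_path_succ path_len_def)
  qed
next
  case (Cons w2 xs)
  show ?case
  proof (intro allI impI)
    fix w0 v
    assume a: "(\<forall>w\<in>set (w0#w2#xs). \<forall>x\<in>F. \<not> real (gdist E' w (f x)) \<le> R) \<and> successively E' (w0#w2#xs)
     \<and> real (gdist E' w0 (f v)) \<le> C \<and> real (gdist E' (last (w0#w2#xs)) (f z)) \<le> C"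
    obtain v2 where v2: "real (gdist E' w2 (f v2)) \<le> C" using cov by blast
    have "E' w0 w2" using a by simp
    then have "real (gdist E' w0 w2) \<le> 1" using gdist_edge[of E' w0 w2] by simp
    then have h2: "real (gdist E' w0 (f v2)) \<le> C + 1" using tri'[of w0 "f v2" w2] v2 by linarith
    obtain p1 where p1: "is_path E p1 \<and> hd p1 = v \<and> last p1 = v2 \<and> path_len p1 \<le> K \<and> set p1 \<inter> F = {}"
      using segment[OF K R, of F w0 v v2] a h2 by auto
    obtain wk2 where wk2: "wk2 \<noteq> [] \<and> successively E wk2 \<and> hd wk2 = v2 \<and> last wk2 = z \<and> set wk2 \<inter> F = {}
        \<and> length wk2 \<le> Suc (K * Suc (length xs))"
      using Cons.IH[rule_format, of w2 v2] a v2 by auto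
    let ?wk = "p1 @ tl wk2"
    have ne: "p1 \<noteq> []" using p1 by (auto simp: is_path_def)
    have "successively E ?wk" using p1 wk2 ne unfolding is_path_succ
      by (cases wk2) (auto simp: successively_append_iff successively_Cons)
    moreover have "hd ?wk = v" using p1 ne by simp
    moreover have "last ?wk = z" using p1 wk2 by (cases wk2) (auto simp: last_append)
    moreover have "set ?wk \<inter> F = {}" using p1 wk2 by (cases wk2) auto
    moreover have "length ?wk \<le> Suc (K * Suc (length (w2#xs)))"
      using p1 wk2 ne by (auto simp: path_len_def)
    ultimately show "\<exists>wk. wk \<noteq> [] \<and> successively E wk \<and> hd wk = v \<and> last wk = z \<and> set wk \<inter> F = {}
        \<and> length wk \<le> Suc (K * Suc (length (w2#xs)))" using ne by blast
  qed
qed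

end




context qi_ctx begin

lemma main:
  assumes degE: "\<forall>v. finite {w. E v w} \<and> card {w. E v w} \<le> D"
    and degE': "\<forall>v. finite {w. E' v w} \<and> card {w. E' v w} \<le> D'"
    and ext: "extraterrestrial E"
  shows "extraterrestrial E'"
  unfolding extraterrestrial_def
proof
  fix m' :: nat
  define K :: nat where "K = nat \<lceil>A*(2*C+1+B)\<rceil> + 1"
  define R :: real where "R = C + A * real K + B + A*A*B"
  define T0 where "T0 = nat \<lfloor>A*B\<rfloor>"
  define T1 where "T1 = nat \<lfloor>A*(R+B)\<rfloor>"
  define T2 where "T2 = nat \<lfloor>R\<rfloor>"
  define b0 where "b0 = (D+1)^T0"
  define b1 where "b1 = (D+1)^T1"
  define b2 where "b2 = (D'+1)^T2"
  define m where "m = 2*b0*m'*b2 + 2*b1 + 1"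
  have K: "A * (2*C+1+B) \<le> real K" unfolding K_def using real_nat_ceiling_ge[of "A*(2*C+1+B)"] by linarith
  have Kpos: "K > 0" unfolding K_def by simp
  have AKpos: "A * real K \<ge> 0" using Apos by simp
  have AABpos: "A*A*B \<ge> 0" using Apos Bpos by simp
  have R: "C + A * real K + B \<le> R" unfolding R_def using AABpos by simp
  have R2: "A*(A*B) + B \<le> R" unfolding R_def using AKpos Cpos by (simp add: algebra_simps)
  have b0pos: "b0 > 0" unfolding b0_def by simp
  obtain k where k: "\<forall>r. \<exists>U F Ob. UFO E m k r U F Ob" using ext unfolding extraterrestrial_def by blast
  define k' where "k' = nat \<lceil>A * real k + B\<rceil>"
  show "\<exists>k'. \<forall>r'. \<exists>U F Ob. UFO E' m' k' r' U F Ob"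
  proof (intro exI[of _ k'] allI)
    fix r' :: nat
    define r where "r = K * r' + nat \<lceil>A*B\<rceil> + 1"
    obtain U F Ob where ufo: "UFO E m k r U F Ob" using k by blast
    have finU: "finite U" and finF: "finite F" and finO: "finite Ob" and UF: "U \<inter> F = {}"
      and UO: "U \<inter> Ob = {}" and FO: "F \<inter> Ob = {}" and Une: "U \<noteq> {}" and cardU: "card U \<ge> m * card F"
      and cm: "complete_matching_k E k U Ob"
      and sep: "\<And>ws. is_path E ws \<Longrightarrow> hd ws \<in> U \<Longrightarrow> last ws \<in> Ob \<Longrightarrow> set ws \<inter> F \<noteq> {} \<or> path_len ws \<ge> r"
      using ufo unfolding UFO_def by auto
    obtain M where MUO: "M \<subseteq> U \<times> Ob" and injf: "inj_on fst M" and injs: "inj_on snd M"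
      and fM: "fst ` M = U" and sM: "snd ` M = Ob" and Mk: "\<forall>(u,v)\<in>M. gdist E u v \<le> k"
      using cm unfolding complete_matching_k_def by blast
    have finM: "finite M" using MUO finU finO finite_subset by blast
    define F' where "F' = {w'. \<exists>x\<in>F. real (gdist E' w' (f x)) \<le> R}"
    define S where "S = {p\<in>M. f (fst p) \<notin> F' \<and> f (snd p) \<notin> F'}"
    have SM: "S \<subseteq> M" unfolding S_def by blast
    have finS: "finite S" using SM finM finite_subset by blast

    have fib: "{u. f u = f u0} \<subseteq> {y. gdist E u0 y \<le> T0}" for u0
    proof
      fix u assume "u \<in> {u. f u = f u0}"
      then have "real (gdist E u0 u) \<le> A * (0 + B)" using qi1[of u0 u] by (simp add: gdist_self)
      then show "u \<in> {y. gdist E u0 y \<le> T0}" unfolding T0_def using le_nat_floor by auto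
    qed
    have cfib: "finite {u. f u = f u0} \<and> card {u. f u = f u0} \<le> b0" for u0
    proof -
      have bb: "finite {y. gdist E u0 y \<le> T0}" "card {y. gdist E u0 y \<le> T0} \<le> b0"
        using ball_card[OF gE(2) degE, of u0 T0] unfolding b0_def by auto
      have "card {u. f u = f u0} \<le> card {y. gdist E u0 y \<le> T0}" by (rule card_mono[OF bb(1) fib])
      then show ?thesis using bb finite_subset[OF fib bb(1)] by simp
    qed
    have c1: "\<forall>s\<in>S. card {s'\<in>S. f (fst s') = f (fst s)} \<le> b0"
    proof
      fix s assume "s \<in> S"
      have "inj_on fst {s'\<in>S. f (fst s') = f (fst s)}" by (rule inj_on_subset[OF injf]) (use SM in blast)
      then have "card {s'\<in>S. f (fst s') = f (fst s)} = card (fst ` {s'\<in>S. f (fst s') = f (fst s)})"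
        by (simp add: card_image)
      also have "\<dots> \<le> card {u. f u = f (fst s)}"
        by (rule card_mono) (use cfib[of "fst s"] in auto)
      also have "\<dots> \<le> b0" using cfib[of "fst s"] by blast
      finally show "card {s'\<in>S. f (fst s') = f (fst s)} \<le> b0" .
    qed
    have c2: "\<forall>s\<in>S. card {s'\<in>S. f (snd s') = f (snd s)} \<le> b0"
    proof
      fix s assume "s \<in> S"
      have "inj_on snd {s'\<in>S. f (snd s') = f (snd s)}" by (rule inj_on_subset[OF injs]) (use SM in blast)
      then have "card {s'\<in>S. f (snd s') = f (snd s)} = card (snd ` {s'\<in>S. f (snd s') = f (snd s)})"
        by (simp add: card_image)
      also have "\<dots> \<le> card {u. f u = f (snd s)}"
        by (rule card_mono) (use cfib[of "snd s"] in auto)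
      also have "\<dots> \<le> b0" using cfib[of "snd s"] by blast
      finally show "card {s'\<in>S. f (snd s') = f (snd s)} \<le> b0" .
    qed
    obtain S0 where S0S: "S0 \<subseteq> S" and inj1: "inj_on (\<lambda>p. f (fst p)) S0" and inj2: "inj_on (\<lambda>p. f (snd p)) S0"
      and cS0: "card S \<le> 2 * b0 * card S0"
      using greedy[OF finS, of "\<lambda>p. f (fst p)" b0 "\<lambda>p. f (snd p)"] c1 c2 by blast
    have finS0: "finite S0" using S0S finS finite_subset by blast

    define P1 where "P1 = {u. f u \<in> F'}"
    have P1sub: "P1 \<subseteq> (\<Union>x\<in>F. {y. gdist E x y \<le> T1})"
    proof
      fix u assume "u \<in> P1"
      then obtain x where x: "x \<in> F" "real (gdist E' (f u) (f x)) \<le> R" unfolding P1_def F'_def by blast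
      have "real (gdist E x u) \<le> A * (real (gdist E' (f x) (f u)) + B)" by (rule qi1)
      also have "\<dots> \<le> A * (R + B)" using x(2) sym'[of "f x" "f u"] Apos by (intro mult_left_mono) auto
      finally have "gdist E x u \<le> T1" unfolding T1_def using le_nat_floor by blast
      then show "u \<in> (\<Union>x\<in>F. {y. gdist E x y \<le> T1})" using x(1) by blast
    qed
    have finU1: "finite (\<Union>x\<in>F. {y. gdist E x y \<le> T1})" using finF ball_card[OF gE(2) degE] by blast
    have "card (\<Union>x\<in>F. {y. gdist E x y \<le> T1}) \<le> (\<Sum>x\<in>F. card {y. gdist E x y \<le> T1})"
      using card_UN_le[OF finF] by blast
    also have "\<dots> \<le> (\<Sum>x\<in>F. b1)" by (rule sum_mono) (use ball_card[OF gE(2) degE] b1_def in auto)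
    finally have "card (\<Union>x\<in>F. {y. gdist E x y \<le> T1}) \<le> card F * b1" by simp
    then have cP1: "card P1 \<le> card F * b1" and finP1: "finite P1"
      using card_mono[OF finU1 P1sub] finite_subset[OF P1sub finU1] by auto

    have F'sub: "F' \<subseteq> (\<Union>x\<in>F. {y. gdist E' (f x) y \<le> T2})"
    proof
      fix w assume "w \<in> F'"
      then obtain x where x: "x \<in> F" "real (gdist E' w (f x)) \<le> R" unfolding F'_def by blast
      then have "gdist E' (f x) w \<le> T2" unfolding T2_def using le_nat_floor sym' by metis
      then show "w \<in> (\<Union>x\<in>F. {y. gdist E' (f x) y \<le> T2})" using x(1) by blast
    qed
    have finU2: "finite (\<Union>x\<in>F. {y. gdist E' (f x) y \<le> T2})" using finF ball_card[OF gE'(2) degE'] by blast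
    have "card (\<Union>x\<in>F. {y. gdist E' (f x) y \<le> T2}) \<le> (\<Sum>x\<in>F. card {y. gdist E' (f x) y \<le> T2})"
      using card_UN_le[OF finF] by blast
    also have "\<dots> \<le> (\<Sum>x\<in>F. b2)" by (rule sum_mono) (use ball_card[OF gE'(2) degE'] b2_def in auto)
    finally have "card (\<Union>x\<in>F. {y. gdist E' (f x) y \<le> T2}) \<le> card F * b2" by simp
    then have cF': "card F' \<le> card F * b2" and finF': "finite F'"
      using card_mono[OF finU2 F'sub] finite_subset[OF F'sub finU2] by auto

    define X1 where "X1 = {p\<in>M. f (fst p) \<in> F'}"
    define X2 where "X2 = {p\<in>M. f (snd p) \<in> F'}"
    have MS: "M \<subseteq> S \<union> X1 \<union> X2" unfolding S_def X1_def X2_def by blast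
    have cX1: "card X1 \<le> card F * b1"
    proof -
      have "card X1 = card (fst ` X1)" using injf inj_on_subset[of fst M X1] card_image unfolding X1_def by fastforce
      also have "\<dots> \<le> card P1" by (rule card_mono[OF finP1]) (auto simp: X1_def P1_def)
      finally show ?thesis using cP1 by simp
    qed
    have cX2: "card X2 \<le> card F * b1"
    proof -
      have "card X2 = card (snd ` X2)" using injs inj_on_subset[of snd M X2] card_image unfolding X2_def by fastforce
      also have "\<dots> \<le> card P1" by (rule card_mono[OF finP1]) (auto simp: X2_def P1_def)
      finally show ?thesis using cP1 by simp
    qed
    have cMU: "card M = card U" using card_image[OF injf] fM by simp
    have "card M \<le> card (S \<union> X1 \<union> X2)" using MS finM finS by (intro card_mono) (auto simp: X1_def X2_def)
    also have "\<dots> \<le> card S + card X1 + card X2"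
      using card_Un_le[of "S \<union> X1" X2] card_Un_le[of S X1] by linarith
    finally have cM: "card U \<le> card S + 2 * (card F * b1)" using cX1 cX2 cMU by linarith
    have mF: "m * card F = 2*b0*(m'*b2*card F) + 2*(card F * b1) + card F" unfolding m_def
      by (simp add: algebra_simps)
    have cS: "2*b0*(m'*b2*card F) + card F \<le> card S" using cM cardU mF by linarith
    have "2*b0*(m'*b2*card F) \<le> 2*b0*card S0" using cS cS0 by linarith
    then have P: "m'*b2*card F \<le> card S0" using b0pos by simp
    have "card U > 0" using Une finU by (simp add: card_gt_0_iff)
    then have "card S > 0"
    proof (cases "card F = 0")
      case True then show ?thesis using cM \<open>card U > 0\<close> by simp
    next
      case False then show ?thesis using cS by linarith
    qed
    then have "card S0 > 0" using cS0 by (cases "card S0") auto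
    then have S0ne: "S0 \<noteq> {}" by auto

    define M' where "M' = (\<lambda>p. (f (fst p), f (snd p))) ` S0"
    define U' where "U' = (\<lambda>p. f (fst p)) ` S0"
    define O' where "O' = (\<lambda>p. f (snd p)) ` S0"
    have cU': "card U' = card S0" unfolding U'_def using card_image[OF inj1] .
    have c_ok: "card U' \<ge> m' * card F'"
    proof -
      have "m' * card F' \<le> m' * (card F * b2)" using cF' by simp
      also have "\<dots> = m'*b2*card F" by (simp add: algebra_simps)
      finally show ?thesis using P cU' by linarith
    qed
    have S0M: "S0 \<subseteq> M" using S0S SM by blast
    have U'F': "U' \<inter> F' = {}" unfolding U'_def using S0S S_def by blast
    have O'F': "F' \<inter> O' = {}" unfolding O'_def using S0S S_def by blast
    have U'O': "U' \<inter> O' = {}"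
    proof (rule ccontr)
      assume "U' \<inter> O' \<noteq> {}"
      then obtain p q where pq: "p \<in> S0" "q \<in> S0" "f (fst p) = f (snd q)" unfolding U'_def O'_def by blast
      define a where "a = fst p"
      define b where "b = snd q"
      have aU: "a \<in> U" using pq S0M fM a_def by blast
      have bO: "b \<in> Ob" using pq S0M sM b_def by blast
      have "real (gdist E a b) \<le> A * (0 + B)" using qi1[of a b] pq a_def b_def by (simp add: gdist_self)
      then have dab: "real (gdist E a b) \<le> A * B" by simp
      obtain ps where ps: "is_path E ps \<and> hd ps = a \<and> last ps = b \<and> path_len ps = gdist E a b"
        using gdist_path[OF gE(2)] by blast
      have c: "A*B \<le> real (nat \<lceil>A*B\<rceil>)" by (rule real_nat_ceiling_ge)
      have "real (gdist E a b) \<le> real (nat \<lceil>A*B\<rceil>)" using dab c by linarith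
      then have "gdist E a b \<le> nat \<lceil>A*B\<rceil>" by (simp only: of_nat_le_iff)
      then have "path_len ps < r" unfolding r_def using ps by simp
      then have "set ps \<inter> F \<noteq> {}" using sep[of ps] ps aU bO by fastforce
      then obtain y where y: "y \<in> set ps" "y \<in> F" by blast
      have "gdist E a y \<le> path_len ps" using gdist_mem[of E ps y] ps y by auto
      then have "real (gdist E a y) \<le> A * B" using ps dab by simp
      then have "A * real (gdist E a y) \<le> A * (A * B)" using Apos by simp
      then have "real (gdist E' (f a) (f y)) \<le> R" using qi2[of a y] R2 by linarith
      then have "f a \<in> F'" unfolding F'_def using y by blast
      moreover have "f a \<notin> F'" using pq S0S S_def a_def by blast
      ultimately show False by blast
    qed
    have match: "complete_matching_k E' k' U' O'"
      unfolding complete_matching_k_def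
    proof (intro exI[of _ M'] conjI)
      show "M' \<subseteq> U' \<times> O'" unfolding M'_def U'_def O'_def by blast
      show "inj_on fst M'" unfolding M'_def using inj1 by (auto simp: inj_on_def)
      show "inj_on snd M'" unfolding M'_def using inj2 by (auto simp: inj_on_def)
      show "fst ` M' = U'" unfolding M'_def U'_def by (simp add: image_image)
      show "snd ` M' = O'" unfolding M'_def O'_def by (simp add: image_image)
      show "\<forall>(u, v)\<in>M'. gdist E' u v \<le> k'"
      proof (clarify)
        fix u v assume "(u, v) \<in> M'"
        then obtain p where p: "p \<in> S0" "u = f (fst p)" "v = f (snd p)" unfolding M'_def by blast
        have "p \<in> M" using p S0M by blast
        then have "(case p of (u,v) \<Rightarrow> gdist E u v \<le> k)" using Mk by blast
        then have "gdist E (fst p) (snd p) \<le> k" by (simp add: case_prod_beta)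
        then have "A * real (gdist E (fst p) (snd p)) \<le> A * real k" using Apos by simp
        then have "real (gdist E' (f (fst p)) (f (snd p))) \<le> A * real k + B" using qi2[of "fst p" "snd p"] by linarith
        then have "real (gdist E' u v) \<le> A * real k + B" using p by simp
        then have "real (gdist E' u v) \<le> real k'" unfolding k'_def
          using real_nat_ceiling_ge[of "A * real k + B"] by linarith
        then show "gdist E' u v \<le> k'" by simp
      qed
    qed
    have sep': "\<forall>ws. is_path E' ws \<and> hd ws \<in> U' \<and> last ws \<in> O' \<longrightarrow> set ws \<inter> F' \<noteq> {} \<or> path_len ws \<ge> r'"
    proof (intro allI impI, rule ccontr)
      fix ws assume a: "is_path E' ws \<and> hd ws \<in> U' \<and> last ws \<in> O'"
        and na: "\<not> (set ws \<inter> F' \<noteq> {} \<or> r' \<le> path_len ws)"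
      obtain w0 xs where ws: "ws = w0 # xs" using a by (cases ws) (auto simp: is_path_def)
      obtain p where p: "p \<in> S0" "hd ws = f (fst p)" using a unfolding U'_def by blast
      obtain q where q: "q \<in> S0" "last ws = f (snd q)" using a unfolding O'_def by blast
      have aU: "fst p \<in> U" using p S0M fM by blast
      have bO: "snd q \<in> Ob" using q S0M sM by blast
      have Fw: "\<forall>w\<in>set (w0#xs). \<forall>x\<in>F. \<not> real (gdist E' w (f x)) \<le> R"
        using na ws unfolding F'_def by blast
      have "successively E' (w0#xs)" using a ws by (simp add: is_path_succ)
      moreover have "real (gdist E' w0 (f (fst p))) \<le> C" using p ws Cpos by (simp add: gdist_self)
      moreover have "real (gdist E' (last (w0#xs)) (f (snd q))) \<le> C" using q ws Cpos by (simp add: gdist_self)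
      ultimately obtain wk where wk: "wk \<noteq> [] \<and> successively E wk \<and> hd wk = fst p \<and> last wk = snd q
          \<and> set wk \<inter> F = {} \<and> length wk \<le> Suc (K * Suc (length xs))"
        using chain[OF K R, of xs F "snd q", rule_format, of w0 "fst p"] Fw by blast
      obtain ps where ps: "is_path E ps \<and> hd ps = hd wk \<and> last ps = last wk \<and> set ps \<subseteq> set wk \<and> length ps \<le> length wk"
        using walk_to_path[of wk E] wk by blast
      have "length xs < r'" using na ws by (simp add: path_len_def)
      then have "Suc (length xs) \<le> r'" by simp
      then have "K * Suc (length xs) \<le> K * r'" by (rule mult_le_mono2)
      then have "path_len ps < r" using ps wk unfolding path_len_def r_def by linarith
      moreover have "set ps \<inter> F = {}" using ps wk by blast
      ultimately show False using sep[of ps] ps wk aU bO by auto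
    qed
    have "UFO E' m' k' r' U' F' O'"
      unfolding UFO_def
      using finS0 finF' U'F' U'O' O'F' S0ne c_ok match sep' by (auto simp: U'_def O'_def)
    then show "\<exists>U F Ob. UFO E' m' k' r' U F Ob" by blast
  qed
qed

end


theorem theoremA:
  fixes E :: "'a \<Rightarrow> 'a \<Rightarrow> bool" and E' :: "'b \<Rightarrow> 'b \<Rightarrow> bool"
  assumes "graph E" and "graph E'"
    and "connected_graph E" and "connected_graph E'"
    and "bounded_degree E" and "bounded_degree E'"
    and "quasi_isometric E E'"
    and "extraterrestrial E"
  shows "extraterrestrial E'"
proof -
  obtain f :: "'a \<Rightarrow> 'b" and A B C :: real where A: "A > 0" "B > 0" "C > 0"
    and q: "\<forall>v1 v2. real (gdist E v1 v2) / A - B \<le> real (gdist E' (f v1) (f v2))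
                 \<and> real (gdist E' (f v1) (f v2)) \<le> A * real (gdist E v1 v2) + B"
    and c: "\<forall>v'. \<exists>v. real (gdist E' v' (f v)) \<le> C"
    using assms(7) unfolding quasi_isometric_def by blast
  obtain D where D: "\<forall>v. finite {w. E v w} \<and> card {w. E v w} \<le> D"
    using assms(5) unfolding bounded_degree_def by blast
  obtain D' where D': "\<forall>v. finite {w. E' v w} \<and> card {w. E' v w} \<le> D'"
    using assms(6) unfolding bounded_degree_def by blast
  have q1: "real (gdist E v1 v2) \<le> A * (real (gdist E' (f v1) (f v2)) + B)" for v1 v2
  proof -
    have "real (gdist E v1 v2) / A \<le> real (gdist E' (f v1) (f v2)) + B" using q by (metis diff_le_eq)
    then show ?thesis using A(1) by (simp add: divide_le_eq mult.commute)
  qed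
  interpret qi_ctx E E' f A B C
    by (unfold_locales) (use assms A q q1 c in auto)
  show ?thesis by (rule main[OF D D' assms(8)])
qed

end
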